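(* Let $\Gamma$ be a finite simple graph on $n$ vertices, let $\alpha\models n$, and let $\mu\vdash n$ be the partition obtained by sorting the parts of $\alpha$. Then $\zeta_\alpha(\Gamma)\le c_\mu(\Gamma)$, where $c_\mu(\Gamma)$ is the coefficient of the monomial symmetric function $m_\mu$ in Stanley's chromatic symmetric function $X_\Gamma=\sum_{\mu\vdash n}c_\mu(\Gamma)m_\mu$.
   Context: Stanley's chromatic symmetric function is $X_\Gamma=\sum_\kappa\prod_{v\in V}x_{\kappa(v)}$, summed over all proper colorings $\kappa:V\to\mathbb{N}=\{1,2,\dots\}$ (no edge has both endpoints of the same color); $m_\mu$ is the monomial symmetric function. For a coloring $\lambda:V\to\mathbb{N}$ of $\Gamma$ with values $i_1<\dots<i_k$, let $I_j=\lambda^{-1}(\{i_1,\dots,i_j\})$, $I_0=\emptyset$. It is ordered if for each $j$, no two distinct vertices $u,w$ with $\lambda(u)=\lambda(w)=i_j$ are joined by a path in $\Gamma$ (possibly a single edge) all of whose internal vertices lie in $I_{j-1}$. Its type is $(|\lambda^{-1}(i_1)|,\dots,|\lambda^{-1}(i_k)|)$. For a composition $\alpha$ of $n$ with $k(\alpha)$ parts, $\zeta_\alpha(\Gamma)$ is the number of surjective ordered colorings $\lambda:V\to\{1,\dots,k(\alpha)\}$ of type $\alpha$. *)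

theory Defs
  imports "HOL-Library.FuncSet"
begin

definition simple_graph :: "'a set \<Rightarrow> ('a \<Rightarrow> 'a \<Rightarrow> bool) \<Rightarrow> bool" where
  "simple_graph V E \<longleftrightarrow> finite V \<and> (\<forall>u v. E u v \<longrightarrow> u \<in> V \<and> v \<in> V)
     \<and> (\<forall>u v. E u v \<longrightarrow> E v u) \<and> (\<forall>v. \<not> E v v)"

definition path_through :: "('a \<Rightarrow> 'a \<Rightarrow> bool) \<Rightarrow> 'a set \<Rightarrow> 'a \<Rightarrow> 'a \<Rightarrow> bool" where
  "path_through E S u w \<longleftrightarrow>
     (\<exists>xs. set xs \<subseteq> S \<and> distinct (u # xs @ [w]) \<and> successively E (u # xs @ [w]))"

text \<open>Ordered colorings. For a color c in the image, the set of vertices with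
strictly smaller colors is exactly I_(j-1) when c = i_j.\<close>
definition ordered_coloring :: "'a set \<Rightarrow> ('a \<Rightarrow> 'a \<Rightarrow> bool) \<Rightarrow> ('a \<Rightarrow> nat) \<Rightarrow> bool" where
  "ordered_coloring V E f \<longleftrightarrow>
     (\<forall>c \<in> f ` V. \<forall>u \<in> V. \<forall>w \<in> V.
        f u = c \<and> f w = c \<and> u \<noteq> w \<longrightarrow> \<not> path_through E {v \<in> V. f v < c} u w)"

definition composition :: "nat list \<Rightarrow> nat \<Rightarrow> bool" where
  "composition alpha n \<longleftrightarrow> (\<forall>a \<in> set alpha. 0 < a) \<and> sum_list alpha = n"

definition zeta :: "'a set \<Rightarrow> ('a \<Rightarrow> 'a \<Rightarrow> bool) \<Rightarrow> nat list \<Rightarrow> nat" where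
  "zeta V E alpha = card {f \<in> V \<rightarrow>\<^sub>E {1..length alpha}.
      f ` V = {1..length alpha} \<and> ordered_coloring V E f \<and>
      (\<forall>j \<in> {1..length alpha}. card {v \<in> V. f v = j} = alpha ! (j - 1))}"

definition proper_coloring :: "'a set \<Rightarrow> ('a \<Rightarrow> 'a \<Rightarrow> bool) \<Rightarrow> ('a \<Rightarrow> nat) \<Rightarrow> bool" where
  "proper_coloring V E g \<longleftrightarrow> (\<forall>u \<in> V. \<forall>v \<in> V. E u v \<longrightarrow> g u \<noteq> g v)"

text \<open>Coefficient of m_mu in X_Gamma = coefficient of the monomial
x_1^mu_1 ... x_k^mu_k, i.e. the number of proper colorings V \<rightarrow> N using color i
exactly mu_i times for i = 1..k and no other colors.\<close>
definition chrom_coeff :: "'a set \<Rightarrow> ('a \<Rightarrow> 'a \<Rightarrow> bool) \<Rightarrow> nat list \<Rightarrow> nat" where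
  "chrom_coeff V E mu = card {g \<in> V \<rightarrow>\<^sub>E {1..length mu}.
      proper_coloring V E g \<and>
      (\<forall>j \<in> {1..length mu}. card {v \<in> V. g v = j} = mu ! (j - 1))}"

end

theory Submission
  imports Defs "HOL-Combinatorics.Permutations"
begin

lemma ordered_proper:
  assumes "ordered_coloring V E f" "\<forall>v. \<not> E v v"
  shows "proper_coloring V E f"
  unfolding proper_coloring_def
proof (intro ballI impI notI)
  fix u v assume uv: "u \<in> V" "v \<in> V" "E u v" "f u = f v"
  have "u \<noteq> v" using uv(3) assms(2) by metis
  moreover have "path_through E {w \<in> V. f w < f u} u v"
    unfolding path_through_def using \<open>u \<noteq> v\<close> uv(3) by (intro exI[of _ "[]"]) auto
  moreover have "f u \<in> f ` V" using uv(1) by blast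
  ultimately show False
    using assms(1) uv(1,2,4) unfolding ordered_coloring_def
    apply -
    apply (drule bspec[of _ _ "f u"], assumption)
    apply (drule bspec[of _ _ u], rule uv(1))
    apply (drule bspec[of _ _ v], rule uv(2))
    apply simp
    done
qed

theorem mainTheorem14:
  fixes V :: "'a set" and E :: "'a \<Rightarrow> 'a \<Rightarrow> bool" and alpha :: "nat list"
  assumes "simple_graph V E"
    and "composition alpha (card V)"
  shows "zeta V E alpha \<le> chrom_coeff V E (rev (sort alpha))"
proof -
  define mu where "mu = rev (sort alpha)"
  define k where "k = length alpha"
  have lm: "length mu = k" unfolding mu_def k_def by simp
  have "mset alpha = mset mu" unfolding mu_def by simp
  then obtain p where pp: "p permutes {..<length mu}" "permute_list p mu = alpha"
    by (rule mset_eq_permutation)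
  have pa: "\<And>i. i < k \<Longrightarrow> alpha ! i = mu ! (p i)"
  proof -
    fix i assume "i < k"
    then have "permute_list p mu ! i = mu ! p i" using pp(1) lm by (intro permute_list_nth) auto
    then show "alpha ! i = mu ! (p i)" using pp(2) by simp
  qed
  have pk: "\<And>i. i < k \<Longrightarrow> p i < k"
    using permutes_in_image[OF pp(1)] lm by simp
  have bp: "bij p" using pp(1) by (rule permutes_bij)
  have ip: "\<And>i. p (inv p i) = i" using permutes_inverses(1)[OF pp(1)] by simp
  have ipk: "\<And>i. i < k \<Longrightarrow> inv p i < k"
    using permutes_in_image[OF permutes_inv[OF pp(1)]] lm by simp
  have fin: "finite V" using assms(1) unfolding simple_graph_def by simp
  have irr: "\<forall>v. \<not> E v v" using assms(1) unfolding simple_graph_def by simp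
  define A where "A = {f \<in> V \<rightarrow>\<^sub>E {1..length alpha}.
      f ` V = {1..length alpha} \<and> ordered_coloring V E f \<and>
      (\<forall>j \<in> {1..length alpha}. card {v \<in> V. f v = j} = alpha ! (j - 1))}"
  define B where "B = {g \<in> V \<rightarrow>\<^sub>E {1..length mu}.
      proper_coloring V E g \<and>
      (\<forall>j \<in> {1..length mu}. card {v \<in> V. g v = j} = mu ! (j - 1))}"
  define F where "F = (\<lambda>f. \<lambda>v. if v \<in> V then p (f v - 1) + 1 else undefined)"
  have "inj_on F A"
  proof (rule inj_onI)
    fix f1 f2 assume f: "f1 \<in> A" "f2 \<in> A" "F f1 = F f2"
    show "f1 = f2"
    proof
      fix v show "f1 v = f2 v"
      proof (cases "v \<in> V")
        case True
        then have "p (f1 v - 1) = p (f2 v - 1)" using fun_cong[OF f(3), of v]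
          unfolding F_def by simp
        then have "f1 v - 1 = f2 v - 1" using bp by (simp add: bij_def inj_eq)
        moreover have "f1 v \<ge> 1" "f2 v \<ge> 1" using f True unfolding A_def by auto
        ultimately show ?thesis by simp
      next
        case False then show ?thesis using f unfolding A_def by (auto simp: PiE_def extensional_def)
      qed
    qed
  qed
  moreover have "F ` A \<subseteq> B"
  proof
    fix g assume "g \<in> F ` A"
    then obtain f where f: "f \<in> A" "g = F f" by auto
    have fr: "\<And>v. v \<in> V \<Longrightarrow> f v \<in> {1..k}" using f(1) unfolding A_def k_def by auto
    have "g \<in> V \<rightarrow>\<^sub>E {1..length mu}"
    proof (rule PiE_I)
      fix v assume v: "v \<in> V"
      have "f v - 1 < k" using fr[OF v] by auto
      then have "p (f v - 1) < k" by (rule pk)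
      then show "g v \<in> {1..length mu}" unfolding f(2) F_def using v lm by auto
    next
      fix v assume "v \<notin> V" then show "g v = undefined" unfolding f(2) F_def by simp
    qed
    moreover have "proper_coloring V E g"
    proof -
      have "proper_coloring V E f" using f(1) ordered_proper irr unfolding A_def by blast
      show ?thesis unfolding proper_coloring_def
      proof (intro ballI impI)
        fix u v assume uv: "u \<in> V" "v \<in> V" "E u v"
        have ne: "f u \<noteq> f v" using \<open>proper_coloring V E f\<close> uv unfolding proper_coloring_def by blast
        have "f u - 1 \<noteq> f v - 1" using ne fr[OF uv(1)] fr[OF uv(2)] by auto
        then have "p (f u - 1) \<noteq> p (f v - 1)" using bp by (simp add: bij_def inj_eq)
        then show "g u \<noteq> g v" unfolding f(2) F_def using uv by simp
      qed
    qed
    moreover have "\<forall>j \<in> {1..length mu}. card {v \<in> V. g v = j} = mu ! (j - 1)"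
    proof
      fix i assume i: "i \<in> {1..length mu}"
      define j where "j = inv p (i - 1) + 1"
      have jk: "j \<in> {1..length alpha}" using ipk[of "i-1"] i lm unfolding j_def k_def by (auto simp: Suc_le_eq)
      have "{v \<in> V. g v = i} = {v \<in> V. f v = j}"
      proof (intro Collect_cong conj_cong refl)
        fix v assume v: "v \<in> V"
        have "g v = i \<longleftrightarrow> p (f v - 1) = i - 1" using i unfolding f(2) F_def using v by auto
        also have "\<dots> \<longleftrightarrow> f v - 1 = inv p (i - 1)"
          using bp ip by (metis bij_inv_eq_iff)
        also have "\<dots> \<longleftrightarrow> f v = j" using fr[OF v] unfolding j_def by auto
        finally show "g v = i \<longleftrightarrow> f v = j" .
      qed
      then have "card {v \<in> V. g v = i} = alpha ! (j - 1)" using f(1) jk unfolding A_def by auto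
      also have "\<dots> = mu ! (i - 1)" unfolding j_def using pa ipk[of "i-1"] ip i lm by auto
      finally show "card {v \<in> V. g v = i} = mu ! (i - 1)" .
    qed
    ultimately show "g \<in> B" unfolding B_def by blast
  qed
  moreover have "finite B"
    by (rule finite_subset[of _ "V \<rightarrow>\<^sub>E {1..length mu}"]) (auto simp: B_def intro: finite_PiE fin)
  ultimately have "card A \<le> card B"
    by (metis card_image card_mono)
  then show ?thesis unfolding zeta_def chrom_coeff_def A_def B_def mu_def .
qed

end
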